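(* Let $d\ge2$, $G$ a $d$-regular graph on $n$ vertices, $F$ regular, $T=F^{-1}(1-1/d)$ and $p=T\cdot(1-1/d)^d$. Then for every equilibrium $\mathbf{T}'\in\mathcal{N}_{p\cdot\mathbf{1}}$, $$\mathcal{R}(p\cdot\mathbf{1},\mathbf{T}')\ \ge\ c\cdot\mathcal{R}(p\cdot\mathbf{1},T\cdot\mathbf{1})$$ for an absolute constant $c>0$ (one may take $c=\tfrac12(1-1/e)$).
   Context: Public-goods pricing game: $n$ buyers are the vertices of an undirected graph $G=([n],E)$; $N(i)=\{j:(i,j)\in E\}$ (so $i\notin N(i)$); $G$ is $d$-regular if $|N(i)|=d$ for all $i$. Values i.i.d. with cumulative distribution function $F$, $F(\infty)=1$. An equilibrium for price vector $\mathbf{p}$ is $\mathbf{T}\in[0,\infty]^n$ (buyer $i$ purchases iff $v_i\ge T_i$) with $T_i=p_i/\prod_{j\in N(i)}F(T_j)$ for all $i$ (convention $c/0=\infty$); $\mathcal{N}_{\mathbf{p}}$ is the set of equilibria; $\mathcal{R}(\mathbf{p},\mathbf{T})=\sum_ip_i(1-F(T_i))$; $p\cdot\mathbf{1}$ is the uniform price vector. $F$ is regular: atomless, supported on an interval in $[0,\infty)$ with positive density $f$ there, and $\phi(x)=x-\frac{1-F(x)}{f(x)}$ non-decreasing. $F^{-1}(q)=\min\{x:F(x)=q\}$. *)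

theory Defs
  imports "HOL-Analysis.Analysis"
begin

definition simple_graph :: "nat \<Rightarrow> (nat \<Rightarrow> nat \<Rightarrow> bool) \<Rightarrow> bool" where
  "simple_graph n E \<longleftrightarrow> (\<forall>i j. E i j \<longrightarrow> i < n \<and> j < n) \<and>
     (\<forall>i j. E i j \<longrightarrow> E j i) \<and> (\<forall>i. \<not> E i i)"

definition nbrs :: "nat \<Rightarrow> (nat \<Rightarrow> nat \<Rightarrow> bool) \<Rightarrow> nat \<Rightarrow> nat set" where
  "nbrs n E i = {j. j < n \<and> E i j}"

definition regular_graph :: "nat \<Rightarrow> (nat \<Rightarrow> nat \<Rightarrow> bool) \<Rightarrow> nat \<Rightarrow> bool" where
  "regular_graph n E d \<longleftrightarrow> (\<forall>i<n. card (nbrs n E i) = d)"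

definition regular_dist :: "(real \<Rightarrow> real) \<Rightarrow> bool" where
  "regular_dist F \<longleftrightarrow> mono F \<and> (F \<longlongrightarrow> 0) at_bot \<and> (F \<longlongrightarrow> 1) at_top \<and>
     continuous_on UNIV F \<and>
     (\<exists>S f. is_interval S \<and> S \<subseteq> {0..} \<and> interior S \<noteq> {} \<and>
        (\<forall>x. (\<forall>y\<in>S. x < y) \<longrightarrow> F x = 0) \<and>
        (\<forall>x. (\<forall>y\<in>S. y < x) \<longrightarrow> F x = 1) \<and>
        (\<forall>x\<in>interior S. (F has_real_derivative f x) (at x) \<and> f x > 0) \<and>
        mono_on (interior S) (\<lambda>x. x - (1 - F x) / f x))"

definition Fext :: "(real \<Rightarrow> real) \<Rightarrow> ereal \<Rightarrow> real" where
  "Fext F t = (case t of ereal x \<Rightarrow> F x | PInfty \<Rightarrow> 1 | MInfty \<Rightarrow> 0)"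

definition Finv :: "(real \<Rightarrow> real) \<Rightarrow> real \<Rightarrow> real" where
  "Finv F q = (LEAST x. F x = q)"

definition ediv :: "real \<Rightarrow> real \<Rightarrow> ereal" where
  "ediv c q = (if q = 0 then \<infinity> else ereal (c / q))"

definition is_equilibrium ::
  "nat \<Rightarrow> (nat \<Rightarrow> nat \<Rightarrow> bool) \<Rightarrow> (real \<Rightarrow> real) \<Rightarrow> (nat \<Rightarrow> real) \<Rightarrow> (nat \<Rightarrow> ereal) \<Rightarrow> bool" where
  "is_equilibrium n E F p T \<longleftrightarrow>
     (\<forall>i<n. 0 \<le> T i \<and> T i = ediv (p i) (\<Prod>j\<in>nbrs n E i. Fext F (T j)))"

definition revenue :: "nat \<Rightarrow> (real \<Rightarrow> real) \<Rightarrow> (nat \<Rightarrow> real) \<Rightarrow> (nat \<Rightarrow> ereal) \<Rightarrow> real" where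
  "revenue n F p T = (\<Sum>i<n. p i * (1 - Fext F (T i)))"

end

theory Submission
  imports Defs
begin

lemma prod_ge_1_minus_sum:
  fixes x :: "nat \<Rightarrow> real"
  assumes "finite A" "\<forall>j\<in>A. 0 \<le> x j \<and> x j \<le> 1"
  shows "1 - sum x A \<le> (\<Prod>j\<in>A. 1 - x j)"
  using assms
proof (induction A rule: finite_induct)
  case empty then show ?case by simp
next
  case (insert a A)
  have IH: "1 - sum x A \<le> (\<Prod>j\<in>A. 1 - x j)" using insert by auto
  have xa: "0 \<le> x a" "x a \<le> 1" using insert by auto
  have s: "0 \<le> sum x A" using insert by (auto intro: sum_nonneg)
  have "(1 - x a) * (1 - sum x A) \<le> (1 - x a) * (\<Prod>j\<in>A. 1 - x j)"
    using IH xa by (intro mult_left_mono) auto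
  moreover have "1 - (x a + sum x A) \<le> (1 - x a) * (1 - sum x A)"
    using xa s by (simp add: algebra_simps)
  ultimately show ?case using insert by simp
qed

lemma F_bounds:
  assumes "regular_dist F"
  shows "0 \<le> F x" "F x \<le> 1"
proof -
  have m: "mono F" and l0: "(F \<longlongrightarrow> 0) at_bot" and l1: "(F \<longlongrightarrow> 1) at_top"
    using assms unfolding regular_dist_def by auto
  show "0 \<le> F x"
  proof (rule ccontr)
    assume "\<not> 0 \<le> F x"
    then have "F x < 0" by simp
    then have "eventually (\<lambda>y. F y > F x) at_bot" using order_tendstoD(1)[OF l0] by blast
    then obtain N where "\<forall>y\<le>N. F y > F x" by (auto simp: eventually_at_bot_linorder)
    then have "F (min N x) > F x" by simp
    moreover have "F (min N x) \<le> F x" using m by (simp add: mono_def)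
    ultimately show False by simp
  qed
  show "F x \<le> 1"
  proof (rule ccontr)
    assume "\<not> F x \<le> 1"
    then have "F x > 1" by simp
    then have "eventually (\<lambda>y. F y < F x) at_top" using order_tendstoD(2)[OF l1] by blast
    then obtain N where "\<forall>y\<ge>N. F y < F x" by (auto simp: eventually_at_top_linorder)
    then have "F (max N x) < F x" by simp
    moreover have "F x \<le> F (max N x)" using m by (simp add: mono_def)
    ultimately show False by simp
  qed
qed

lemma F_neg:
  assumes "regular_dist F" "x < 0"
  shows "F x = 0"
proof -
  obtain S where S: "S \<subseteq> {0..}" "\<forall>x. (\<forall>y\<in>S. x < y) \<longrightarrow> F x = 0"
    using assms(1) unfolding regular_dist_def by blast
  have "\<forall>y\<in>S. x < y" using S(1) assms(2) by force
  then show ?thesis using S(2) by blast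
qed

lemma Finv_prop:
  assumes "regular_dist F" "0 < q" "q < 1"
  shows "F (Finv F q) = q" "0 \<le> Finv F q"
proof -
  have m: "mono F" and l0: "(F \<longlongrightarrow> 0) at_bot" and l1: "(F \<longlongrightarrow> 1) at_top"
    and c: "continuous_on UNIV F"
    using assms unfolding regular_dist_def by auto
  have "eventually (\<lambda>y. F y < q) at_bot" using order_tendstoD(2)[OF l0] assms(2) by blast
  then obtain N where N: "\<forall>y\<le>N. F y < q" by (auto simp: eventually_at_bot_linorder)
  have "eventually (\<lambda>y. F y > q) at_top" using order_tendstoD(1)[OF l1] assms(3) by blast
  then obtain M where M: "\<forall>y\<ge>M. F y > q" by (auto simp: eventually_at_top_linorder)
  have "\<exists>x. min N M \<le> x \<and> x \<le> M \<and> F x = q"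
    using N M by (intro IVT') (auto intro: continuous_on_subset[OF c] less_imp_le)
  then obtain x0 where x0: "F x0 = q" by blast
  define S where "S = {x. F x = q}"
  have Sne: "S \<noteq> {}" using x0 S_def by blast
  have pos: "\<And>x. x \<in> S \<Longrightarrow> 0 \<le> x"
  proof -
    fix x assume "x \<in> S"
    then have "F x = q" by (simp add: S_def)
    then show "0 \<le> x" using F_neg[OF assms(1), of x] assms(2) by force
  qed
  have bdd: "bdd_below S" using pos by (meson bdd_below_def)
  have cl: "closed S" unfolding S_def by (intro closed_Collect_eq c continuous_on_const)
  have inS: "Inf S \<in> S" using closed_contains_Inf[OF Sne bdd cl] .
  have "Finv F q = Inf S"
    unfolding Finv_def
  proof (rule Least_equality)
    show "F (Inf S) = q" using inS by (simp add: S_def)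
    fix y assume "F y = q"
    then have "y \<in> S" by (simp add: S_def)
    then show "Inf S \<le> y" using bdd by (rule cInf_lower)
  qed
  then show "F (Finv F q) = q" "0 \<le> Finv F q" using inS pos by (auto simp: S_def)
qed

lemma pow_le_exp:
  assumes "(d::nat) \<ge> 1"
  shows "(1 - 1 / real d) ^ d \<le> exp (-1)"
proof -
  have "1 - 1 / real d \<le> exp (- 1 / real d)"
    using exp_ge_add_one_self[of "-1 / real d"] by simp
  then have "(1 - 1 / real d) ^ d \<le> exp (- 1 / real d) ^ d"
    using assms by (intro power_mono) (auto simp: field_simps)
  also have "\<dots> = exp (real d * (- 1 / real d))" by (simp only: exp_of_nat_mult)
  also have "\<dots> = exp (-1)" using assms by simp
  finally show ?thesis .
qed

theorem lemma4p3:
  fixes n d :: nat and E :: "nat \<Rightarrow> nat \<Rightarrow> bool" and F :: "real \<Rightarrow> real"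
    and T :: real and p :: real and T' :: "nat \<Rightarrow> ereal"
  assumes "d \<ge> 2"
    and "simple_graph n E" and "regular_graph n E d"
    and "regular_dist F"
    and "T = Finv F (1 - 1 / real d)"
    and "p = T * (1 - 1 / real d) ^ d"
    and "is_equilibrium n E F (\<lambda>_. p) T'"
  shows "revenue n F (\<lambda>_. p) T' \<ge> (1 / 2) * (1 - exp (-1)) * revenue n F (\<lambda>_. p) (\<lambda>_. ereal T)"
proof -
  have d1: "real d \<ge> 2" using assms(1) by simp
  have FT: "F T = 1 - 1 / real d" and T0: "0 \<le> T"
    using Finv_prop[OF assms(4), of "1 - 1 / real d"] d1 assms(5) by auto
  have p0: "0 \<le> p" using assms(6) T0 d1 by simp
  define q where "q j = Fext F (T' j)" for j
  define a where "a j = 1 - q j" for j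
  have qb: "0 \<le> q j \<and> q j \<le> 1" for j
    using F_bounds[OF assms(4)] by (cases "T' j") (auto simp: q_def Fext_def)
  have ab: "0 \<le> a j \<and> a j \<le> 1" for j using qb[of j] by (simp add: a_def)
  define K where "K = 1 - exp (-1::real)"
  have nfin: "finite (nbrs n E i)" for i by (simp add: nbrs_def)
  have eq: "T' i = ediv p (\<Prod>j\<in>nbrs n E i. q j)" if "i < n" for i
    using assms(7) that unfolding is_equilibrium_def q_def by auto
  have key: "real d * a i + (\<Sum>j\<in>nbrs n E i. a j) \<ge> K" if i: "i < n" for i
  proof (cases "(\<Sum>j\<in>nbrs n E i. a j) \<ge> K")
    case True
    moreover have "0 \<le> real d * a i" using ab[of i] by simp
    ultimately show ?thesis by linarith
  next
    case False
    have "1 - (\<Sum>j\<in>nbrs n E i. a j) \<le> (\<Prod>j\<in>nbrs n E i. 1 - a j)"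
      using ab by (intro prod_ge_1_minus_sum nfin) auto
    then have P: "(\<Prod>j\<in>nbrs n E i. q j) > exp (-1)"
      using False by (simp add: K_def a_def)
    have pe: "(1 - 1 / real d) ^ d \<le> exp (-1)" using pow_le_exp assms(1) by simp
    have Ppos: "(\<Prod>j\<in>nbrs n E i. q j) > 0" using P by (meson exp_gt_zero less_trans)
    have "p \<le> T * (\<Prod>j\<in>nbrs n E i. q j)"
      unfolding assms(6) using T0 P pe by (intro mult_left_mono) auto
    then have le: "p / (\<Prod>j\<in>nbrs n E i. q j) \<le> T"
      using Ppos by (simp add: divide_le_eq mult.commute)
    have "T' i = ereal (p / (\<Prod>j\<in>nbrs n E i. q j))"
      using eq[OF i] Ppos by (simp add: ediv_def)
    then have "q i = F (p / (\<Prod>j\<in>nbrs n E i. q j))" by (simp add: q_def Fext_def)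
    also have "\<dots> \<le> F T" using le assms(4) by (auto simp: regular_dist_def mono_def)
    finally have "a i \<ge> 1 / real d" using FT by (simp add: a_def)
    then have "real d * a i \<ge> 1" using d1 by (simp add: field_simps)
    moreover have "K \<le> 1" by (simp add: K_def)
    moreover have "(\<Sum>j\<in>nbrs n E i. a j) \<ge> 0" using ab by (simp add: sum_nonneg)
    ultimately show ?thesis by linarith
  qed
  have swap: "(\<Sum>i<n. \<Sum>j\<in>nbrs n E i. a j) = real d * (\<Sum>i<n. a i)"
  proof -
    have nb: "nbrs n E i = {j\<in>{..<n}. E i j}" for i by (auto simp: nbrs_def)
    have "(\<Sum>i<n. \<Sum>j\<in>nbrs n E i. a j) = (\<Sum>i<n. \<Sum>j<n. if E i j then a j else 0)"
      unfolding nb by (intro sum.cong refl sum.inter_filter) simp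
    also have "\<dots> = (\<Sum>j<n. \<Sum>i<n. if E i j then a j else 0)" by (rule sum.swap)
    also have "\<dots> = (\<Sum>j<n. a j * real (card (nbrs n E j)))"
    proof (rule sum.cong[OF refl])
      fix j assume j: "j \<in> {..<n}"
      have "(\<Sum>i<n. if E i j then a j else 0) = (\<Sum>i\<in>{i\<in>{..<n}. E i j}. a j)"
        by (rule sum.inter_filter[symmetric]) simp
      also have "{i\<in>{..<n}. E i j} = nbrs n E j"
        using assms(2) by (auto simp: nbrs_def simple_graph_def)
      finally show "(\<Sum>i<n. if E i j then a j else 0) = a j * real (card (nbrs n E j))"
        by simp
    qed
    also have "\<dots> = (\<Sum>j<n. a j * real d)"
      using assms(3) by (intro sum.cong) (auto simp: regular_graph_def)
    finally show ?thesis by (simp add: sum_distrib_left mult.commute)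
  qed
  have "real n * K \<le> (\<Sum>i<n. real d * a i + (\<Sum>j\<in>nbrs n E i. a j))"
    using sum_mono[of "{..<n}" "\<lambda>_. K", OF key] by simp
  also have "\<dots> = 2 * real d * (\<Sum>i<n. a i)"
    by (simp add: sum.distrib swap sum_distrib_left mult.assoc)
  finally have main: "real n * K \<le> 2 * real d * (\<Sum>i<n. a i)" .
  have L: "revenue n F (\<lambda>_. p) T' = p * (\<Sum>i<n. a i)"
    by (simp add: revenue_def a_def q_def sum_distrib_left)
  have R: "revenue n F (\<lambda>_. p) (\<lambda>_. ereal T) = real n * p / real d"
    by (simp add: revenue_def Fext_def FT)
  have "real n * K / (2 * real d) \<le> (\<Sum>i<n. a i)"
    using main d1 by (simp add: divide_le_eq mult.commute)
  then have "p * (real n * K / (2 * real d)) \<le> p * (\<Sum>i<n. a i)"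
    using p0 by (rule mult_left_mono)
  then show ?thesis unfolding L R K_def by (simp add: field_simps)
qed

end
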